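(* Let $M$ be a modular lattice of finite length. For all $a,b\in M$: (a) if $a\le b$ then $a^*\le b^*$; (a$^\delta$) if $a\le b$ then $a^+\le b^+$; (b) $a\le a^{+*}\le a^*$; (b$^\delta$) $a^+\le a^{*+}\le a$; (c) $a^{*+*}=a^*$; (c$^\delta$) $a^{+*+}=a^+$; (d) if $a=a^{*+}$ and $b=b^{*+}$ then $(a+b)^{*+}=a+b$; (d$^\delta$) if $a=a^{+*}$ and $b=b^{+*}$ then $(a\cdot b)^{+*}=a\cdot b$; (e) $(a+b)^+=a^++b^+$; (e$^\delta$) $(a\cdot b)^*=a^*\cdot b^*$. (Here $a^{*+}$ means $(a^* )^+$, etc.)
   Context: $M$ is a modular lattice of finite length (every chain finite) with join $+$, meet $\cdot$, least element $0$ and greatest element $1$. For $a\in M$: $a^*$ is the join of all elements covering $a$ if $a<1$, and $1^*=1$; $a^+$ is the meet of all elements covered by $a$ if $a>0$, and $0^+=0$. *)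

theory Defs
  imports Main
begin

definition modular_lattice :: "'a::bounded_lattice itself \<Rightarrow> bool" where
  "modular_lattice _ \<longleftrightarrow> (\<forall>a b c::'a. a \<le> c \<longrightarrow> sup a (inf b c) = inf (sup a b) c)"

definition finite_length :: "'a::bounded_lattice itself \<Rightarrow> bool" where
  "finite_length _ \<longleftrightarrow> (\<forall>C::'a set. Complete_Partial_Order.chain (\<le>) C \<longrightarrow> finite C)"

definition covers :: "'a::order \<Rightarrow> 'a \<Rightarrow> bool" where
  "covers a b \<longleftrightarrow> a < b \<and> \<not> (\<exists>c. a < c \<and> c < b)"

definition is_join :: "'a::order set \<Rightarrow> 'a \<Rightarrow> bool" where
  "is_join S x \<longleftrightarrow> (\<forall>s\<in>S. s \<le> x) \<and> (\<forall>y. (\<forall>s\<in>S. s \<le> y) \<longrightarrow> x \<le> y)"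

definition is_meet :: "'a::order set \<Rightarrow> 'a \<Rightarrow> bool" where
  "is_meet S x \<longleftrightarrow> (\<forall>s\<in>S. x \<le> s) \<and> (\<forall>y. (\<forall>s\<in>S. y \<le> s) \<longrightarrow> y \<le> x)"

definition ustar :: "'a::bounded_lattice \<Rightarrow> 'a" where
  "ustar a = (if a = top then top else (THE x. is_join {c. covers a c} x))"

definition lplus :: "'a::bounded_lattice \<Rightarrow> 'a" where
  "lplus a = (if a = bot then bot else (THE x. is_meet {c. covers c a} x))"

end

theory Submission imports Defs "HOL-Library.Dual_Ordered_Lattice" begin

lemma fl_wf:
  assumes "finite_length TYPE('a::bounded_lattice)"
  shows "wf {(x::'a, y). x < y}" "wf {(x::'a, y). y < x}"
proof -
  have chainfin: "finite C" if "Complete_Partial_Order.chain (\<le>) (C::'a set)" for C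
    using assms that unfolding finite_length_def by blast
  show "wf {(x::'a, y). x < y}"
  proof (subst wf_iff_no_infinite_down_chain, rule notI)
    assume "\<exists>f. \<forall>i. (f (Suc i), f i) \<in> {(x::'a, y). x < y}"
    then obtain f :: "nat \<Rightarrow> 'a" where f: "\<And>i. f (Suc i) < f i" by auto
    have lt: "i < j \<Longrightarrow> f j < f i" for i j
    proof (induction j)
      case 0 then show ?case by simp
    next
      case (Suc j) then show ?case using f[of j] by (metis less_Suc_eq order.strict_trans)
    qed
    have "Complete_Partial_Order.chain (\<le>) (range f)"
      unfolding chain_def by (metis lt linorder_neq_iff order.order_iff_strict rangeE)
    then have "finite (range f)" by (rule chainfin)
    moreover have "inj f" unfolding inj_def by (metis lt linorder_neq_iff order.irrefl)
    ultimately show False using finite_imageD by fastforce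
  qed
  show "wf {(x::'a, y). y < x}"
  proof (subst wf_iff_no_infinite_down_chain, rule notI)
    assume "\<exists>f. \<forall>i. (f (Suc i), f i) \<in> {(x::'a, y). y < x}"
    then obtain f :: "nat \<Rightarrow> 'a" where f: "\<And>i. f i < f (Suc i)" by auto
    have lt: "i < j \<Longrightarrow> f i < f j" for i j
    proof (induction j)
      case 0 then show ?case by simp
    next
      case (Suc j) then show ?case using f[of j] by (metis less_Suc_eq order.strict_trans)
    qed
    have "Complete_Partial_Order.chain (\<le>) (range f)"
      unfolding chain_def by (metis lt linorder_neq_iff order.order_iff_strict rangeE)
    then have "finite (range f)" by (rule chainfin)
    moreover have "inj f" unfolding inj_def by (metis lt linorder_neq_iff order.irrefl)
    ultimately show False using finite_imageD by fastforce
  qed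
qed

lemma min_ex:
  assumes "finite_length TYPE('a::bounded_lattice)" "(x::'a) \<in> Q"
  obtains m where "m \<in> Q" "\<And>y. y < m \<Longrightarrow> y \<notin> Q"
proof -
  obtain z where "z \<in> Q" "\<And>y. (y, z) \<in> {(x::'a, y). x < y} \<Longrightarrow> y \<notin> Q"
    using wfE_min[OF fl_wf(1)[OF assms(1)] assms(2)] by blast
  then show ?thesis using that by auto
qed

lemma max_ex:
  assumes "finite_length TYPE('a::bounded_lattice)" "(x::'a) \<in> Q"
  obtains m where "m \<in> Q" "\<And>y. m < y \<Longrightarrow> y \<notin> Q"
proof -
  obtain z where "z \<in> Q" "\<And>y. (y, z) \<in> {(x::'a, y). y < x} \<Longrightarrow> y \<notin> Q"
    using wfE_min[OF fl_wf(2)[OF assms(1)] assms(2)] by blast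
  then show ?thesis using that by auto
qed

lemma join_exists:
  assumes "finite_length TYPE('a::bounded_lattice)"
  shows "\<exists>x. is_join (S::'a set) x"
proof -
  let ?U = "{y::'a. \<forall>s\<in>S. s \<le> y}"
  have "top \<in> ?U" by simp
  then obtain m where m: "m \<in> ?U" and min: "\<And>y. y < m \<Longrightarrow> y \<notin> ?U"
    by (rule min_ex[OF assms]) iprover
  have "m \<le> y" if "y \<in> ?U" for y
  proof -
    have "inf m y \<in> ?U" using m that by simp
    then have "\<not> inf m y < m" using min by blast
    then show ?thesis by (metis inf.absorb_iff1 inf_le1 order.not_eq_order_implies_strict)
  qed
  then show ?thesis using m unfolding is_join_def by blast
qed

lemma meet_exists:
  assumes "finite_length TYPE('a::bounded_lattice)"
  shows "\<exists>x. is_meet (S::'a set) x"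
proof -
  let ?U = "{y::'a. \<forall>s\<in>S. y \<le> s}"
  have "bot \<in> ?U" by simp
  then obtain m where m: "m \<in> ?U" and min: "\<And>y. m < y \<Longrightarrow> y \<notin> ?U"
    by (rule max_ex[OF assms]) iprover
  have "y \<le> m" if "y \<in> ?U" for y
  proof -
    have "sup m y \<in> ?U" using m that by simp
    then have "\<not> m < sup m y" using min by blast
    then show ?thesis by (metis sup.absorb_iff1 sup_ge1 order.not_eq_order_implies_strict)
  qed
  then show ?thesis using m unfolding is_meet_def by blast
qed

lemma ustar_join:
  assumes "finite_length TYPE('a::bounded_lattice)" "(a::'a) \<noteq> top"
  shows "is_join {c. covers a c} (ustar a)"
proof -
  obtain x where x: "is_join {c. covers a c} x" using join_exists[OF assms(1)] by blast
  have "(THE x. is_join {c. covers a c} x) = x"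
    using x by (intro the_equality) (simp, unfold is_join_def, meson order.antisym)
  then show ?thesis using x assms(2) unfolding ustar_def by simp
qed

lemma lplus_meet:
  assumes "finite_length TYPE('a::bounded_lattice)" "(a::'a) \<noteq> bot"
  shows "is_meet {c. covers c a} (lplus a)"
proof -
  obtain x where x: "is_meet {c. covers c a} x" using meet_exists[OF assms(1)] by blast
  have "(THE x. is_meet {c. covers c a} x) = x"
    using x by (intro the_equality) (simp, unfold is_meet_def, meson order.antisym)
  then show ?thesis using x assms(2) unfolding lplus_def by simp
qed

lemma cover_above:
  assumes "finite_length TYPE('a::bounded_lattice)" "(a::'a) < b"
  shows "\<exists>c. covers a c \<and> c \<le> b"
proof -
  have "b \<in> {c. a < c \<and> c \<le> b}" using assms(2) by simp
  then obtain m where m: "m \<in> {c. a < c \<and> c \<le> b}" and min: "\<And>y. y < m \<Longrightarrow> y \<notin> {c. a < c \<and> c \<le> b}"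
    by (rule min_ex[OF assms(1)]) iprover
  have "covers a m" unfolding covers_def
  proof (intro conjI notI)
    show "a < m" using m by simp
    assume "\<exists>c. a < c \<and> c < m"
    then obtain c where c: "a < c" "c < m" by blast
    have "c \<le> b" using c(2) m by (simp add: order.strict_implies_order order.trans[of c m b])
    then have "c \<in> {c. a < c \<and> c \<le> b}" using c(1) by simp
    then show False using min c(2) by blast
  qed
  then show ?thesis using m by blast
qed

lemma cover_le_ustar:
  assumes that: "finite_length TYPE('a::bounded_lattice)" and ac: "covers (a::'a) c"
  shows "c \<le> ustar a"
proof -
  have "a \<noteq> top" using ac unfolding covers_def using top.extremum_strict by blast
  then show ?thesis using ustar_join[OF that] ac unfolding is_join_def by blast
qed

lemma ustar_least:
  assumes that: "finite_length TYPE('a::bounded_lattice)"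
  shows "(a::'a) \<noteq> top \<Longrightarrow> (\<And>c. covers a c \<Longrightarrow> c \<le> y) \<Longrightarrow> ustar a \<le> y"
  using ustar_join[OF that] unfolding is_join_def by blast

lemma le_ustar:
  assumes fl: "finite_length TYPE('a::bounded_lattice)"
  shows "(a::'a) \<le> ustar a"
proof (cases "a = top")
  case True then show ?thesis by (simp add: ustar_def)
next
  case False
  then have "a < top" using top.not_eq_extremum by blast
  then obtain c where c: "covers a c" using cover_above[OF fl, of a top] by blast
  then have "c \<le> ustar a" by (rule cover_le_ustar[OF fl])
  moreover have "a \<le> c" using c unfolding covers_def by (simp add: order.strict_implies_order)
  ultimately show ?thesis by (rule order.trans[rotated])
qed

lemma mod_law: "modular_lattice TYPE('a::bounded_lattice) \<Longrightarrow> (x::'a) \<le> z \<Longrightarrow> sup x (inf y z) = inf (sup x y) z"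
  unfolding modular_lattice_def by blast

lemma transfer_up:
  assumes "modular_lattice TYPE('a::bounded_lattice)" "covers (a::'a) c" "a \<le> x" "\<not> c \<le> x"
  shows "covers x (sup x c)"
  unfolding covers_def
proof (intro conjI notI)
  have "sup x c \<noteq> x" using assms(4) by (metis sup_ge2)
  then show "x < sup x c" by (simp add: less_le)
  assume "\<exists>y. x < y \<and> y < sup x c"
  then obtain y where y: "x < y" "y < sup x c" by blast
  have eq: "sup x (inf c y) = y" using mod_law[OF assms(1), of x y c] y
    by (metis inf.absorb2 order.strict_implies_order)
  have "a \<le> inf c y" using assms y covers_def by (metis inf.bounded_iff order.strict_implies_order order.trans)
  moreover have "inf c y \<le> c" by simp
  ultimately have "inf c y = a \<or> inf c y = c" using assms(2) unfolding covers_def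
    by (metis order.not_eq_order_implies_strict)
  then show False
  proof
    assume "inf c y = a" then show False using eq y assms(3) by (simp add: sup.absorb1)
  next
    assume "inf c y = c" then have "c \<le> y" by (metis inf.absorb_iff1 inf.commute)
    then show False using y by (simp add: less_le_not_le)
  qed
qed

lemma transfer_down:
  assumes "modular_lattice TYPE('a::bounded_lattice)" "covers (x::'a) y" "z \<le> y" "\<not> z \<le> x"
  shows "covers (inf z x) z"
  unfolding covers_def
proof (intro conjI notI)
  show "inf z x < z" using assms(4) by (metis inf.absorb_iff1 inf_le1 inf_le2 order.not_eq_order_implies_strict order.trans)
  assume "\<exists>w. inf z x < w \<and> w < z"
  then obtain w where w: "inf z x < w" "w < z" by blast
  have eq: "sup w (inf x z) = inf (sup w x) z" using mod_law[OF assms(1), of w z x] w by simp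
  have lhs: "sup w (inf x z) = w" using w by (simp add: inf.commute sup.absorb1 order.strict_implies_order)
  have "x \<le> sup w x" by simp
  moreover have "sup w x \<le> y" using w assms covers_def by (meson le_sup_iff order.strict_implies_order order.trans)
  ultimately have "sup w x = x \<or> sup w x = y" using assms(2) unfolding covers_def
    by (metis order.not_eq_order_implies_strict)
  then show False
  proof
    assume "sup w x = x" then have "w \<le> inf z x" using w by (metis inf.bounded_iff sup.absorb_iff2 order.strict_implies_order)
    then show False using w by (simp add: order.strict_iff_not)
  next
    assume "sup w x = y" then have "w = z" using eq lhs assms(3) by (simp add: inf.absorb2)
    then show False using w by simp
  qed
qed

lemma ustar_mono:
  assumes "modular_lattice TYPE('a::bounded_lattice)" "finite_length TYPE('a)" "(a::'a) \<le> b"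
  shows "ustar a \<le> ustar b"
proof (cases "b = top")
  case True then show ?thesis by (simp add: ustar_def)
next
  case False
  then have "a \<noteq> top" using assms(3) top.extremum_unique by blast
  then show ?thesis
  proof (rule ustar_least[OF assms(2)])
    fix c assume c: "covers a c"
    show "c \<le> ustar b"
    proof (cases "c \<le> b")
      case True then show ?thesis using le_ustar[OF assms(2), of b] by simp
    next
      case False
      then have "covers b (sup b c)" using transfer_up[OF assms(1) c assms(3)] by simp
      then show ?thesis using cover_le_ustar[OF assms(2)] by (meson order.trans sup_ge2)
    qed
  qed
qed

lemma Inf_fin_inf_image:
  assumes "finite (D::'a::lattice set)" "D \<noteq> {}"
  shows "Inf_fin (inf c ` D) = inf c (Inf_fin D)"
  using assms
proof (induction D rule: finite_ne_induct)
  case (singleton x) then show ?case by simp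
next
  case (insert x F)
  then show ?case by (simp add: inf.assoc inf.left_commute inf.commute)
qed

lemma keyK:
  assumes md: "modular_lattice TYPE('a::bounded_lattice)" and fl: "finite_length TYPE('a)"
  shows "finite C \<Longrightarrow> C \<noteq> {} \<Longrightarrow> (\<forall>c\<in>C. covers c (y::'a)) \<Longrightarrow> y \<le> ustar (Inf_fin C)"
proof (induction y arbitrary: C rule: wf_induct[OF fl_wf(1)[OF fl]])
  case (1 y)
  have outer: "\<And>z C. z < y \<Longrightarrow> finite C \<Longrightarrow> C \<noteq> {} \<Longrightarrow> (\<forall>c\<in>C. covers c z) \<Longrightarrow> z \<le> ustar (Inf_fin C)"
    using 1(1) by blast
  show ?case using 1(2,3,4)
  proof (induction C rule: finite_ne_induct)
    case (singleton c) then show ?case using cover_le_ustar[OF fl] by simp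
  next
    case (insert c D)
    let ?d = "Inf_fin D"
    have IH: "y \<le> ustar ?d" using insert by simp
    have cy: "covers c y" using insert by simp
    obtain e where e: "e \<in> D" using insert by blast
    have ey: "covers e y" using insert e by simp
    have dy: "?d \<le> y" using Inf_fin.coboundedI[OF insert(1) e] ey unfolding covers_def
      by (meson order.trans order.strict_implies_order)
    have eq: "Inf_fin (insert c D) = inf c ?d" using insert by (simp add: Inf_fin.insert)
    show ?case
    proof (cases "?d \<le> c")
      case True then show ?thesis using eq IH by (simp add: inf.absorb2)
    next
      case False
      have syc: "sup c ?d = y"
      proof -
        have "sup c ?d \<noteq> c" using False by (metis sup_ge2)
        then have "c < sup c ?d" by (simp add: less_le)
        moreover have "sup c ?d \<le> y" using dy cy unfolding covers_def by (simp add: order.strict_implies_order)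
        ultimately show ?thesis using cy unfolding covers_def by (metis order.not_eq_order_implies_strict)
      qed
      have cd: "covers (inf ?d c) ?d" using transfer_down[OF md cy dy False] .
      then have d_le: "?d \<le> ustar (inf c ?d)" using cover_le_ustar[OF fl] by (simp add: inf.commute)
      have covs: "\<forall>x\<in>inf c ` D. covers x c"
      proof
        fix x assume "x \<in> inf c ` D"
        then obtain e where e: "e \<in> D" "x = inf c e" by blast
        have ey: "covers e y" using insert e by simp
        have "\<not> c \<le> e"
        proof
          assume ce: "c \<le> e"
          have "e < y" using ey covers_def by blast
          then have "c = e" using cy ce unfolding covers_def by (metis order.not_eq_order_implies_strict)
          then show False using e insert by blast
        qed
        then show "covers x c" using transfer_down[OF md ey, of c] cy e unfolding covers_def
          by (simp add: order.strict_implies_order)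
      qed
      have "c < y" using cy covers_def by blast
      then have "c \<le> ustar (Inf_fin (inf c ` D))"
        using outer[of c "inf c ` D"] covs insert by blast
      moreover have "Inf_fin (inf c ` D) = inf c ?d" using Inf_fin_inf_image[OF insert(1,2)] .
      ultimately have c_le: "c \<le> ustar (inf c ?d)" by simp
      show ?thesis using syc c_le d_le eq by (metis le_sup_iff)
    qed
  qed
qed

lemma cover_below:
  assumes "finite_length TYPE('a::bounded_lattice)" "(a::'a) < b"
  shows "\<exists>c. covers c b \<and> a \<le> c"
proof -
  have "a \<in> {c. a \<le> c \<and> c < b}" using assms(2) by simp
  then obtain m where m: "m \<in> {c. a \<le> c \<and> c < b}" and min: "\<And>y. m < y \<Longrightarrow> y \<notin> {c. a \<le> c \<and> c < b}"
    by (rule max_ex[OF assms(1)]) iprover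
  have "covers m b" unfolding covers_def
  proof (intro conjI notI)
    show "m < b" using m by simp
    assume "\<exists>c. m < c \<and> c < b"
    then obtain c where c: "m < c" "c < b" by blast
    have "a \<le> c" using c(1) m by (simp add: order.strict_implies_order order.trans[of a m c])
    then have "c \<in> {c. a \<le> c \<and> c < b}" using c(2) by simp
    then show False using min c(1) by blast
  qed
  then show ?thesis using m by blast
qed

lemma key:
  assumes md: "modular_lattice TYPE('a::bounded_lattice)" and fl: "finite_length TYPE('a)"
  shows "(y::'a) \<le> ustar (lplus y)"
proof (cases "y = bot")
  case True then show ?thesis by (simp add: lplus_def)
next
  case False
  let ?L = "{c. covers c y}"
  let ?Q = "{Inf_fin C | C. finite C \<and> C \<noteq> {} \<and> C \<subseteq> ?L}"
  obtain c0 where c0: "covers c0 y" using cover_below[OF fl, of bot y] False bot.not_eq_extremum by blast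
  then have "c0 \<in> ?Q" by (intro CollectI exI[of _ "{c0}"]) auto
  then obtain m where m: "m \<in> ?Q" and min: "\<And>z. z < m \<Longrightarrow> z \<notin> ?Q"
    by (rule min_ex[OF fl]) iprover
  obtain C where C: "finite C" "C \<noteq> {}" "C \<subseteq> ?L" "m = Inf_fin C" using m by blast
  have "m \<le> c" if "covers c y" for c
  proof -
    have "inf c m \<in> ?Q" using C that by (intro CollectI exI[of _ "insert c C"]) (auto simp: Inf_fin.insert)
    then have "\<not> inf c m < m" using min by blast
    then show ?thesis by (metis inf.absorb_iff2 inf_le2 order.not_eq_order_implies_strict)
  qed
  then have "m \<le> lplus y" using lplus_meet[OF fl False] unfolding is_meet_def by blast
  moreover have "y \<le> ustar m" using keyK[OF md fl C(1,2)] C(3,4) by auto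
  ultimately show ?thesis using ustar_mono[OF md fl] order.trans by blast
qed

lemma dual_modular:
  assumes "modular_lattice TYPE('a::bounded_lattice)"
  shows "modular_lattice TYPE('a dual)"
  unfolding modular_lattice_def
proof (intro allI impI)
  fix x y z :: "'a dual"
  assume xz: "x \<le> z"
  obtain x' where x': "x = dual x'" using dual_undual by metis
  obtain y' where y': "y = dual y'" using dual_undual by metis
  obtain z' where z': "z = dual z'" using dual_undual by metis
  have "z' \<le> x'" using xz x' z' by simp
  then have m: "sup z' (inf y' x') = inf (sup z' y') x'" using mod_law[OF assms] by blast
  have e: "inf x' (sup y' z') = sup (inf x' y') z'" using m by (metis inf.commute sup.commute)
  have "sup x (inf y z) = dual (inf x' (sup y' z'))" unfolding x' y' z' by simp
  also have "\<dots> = dual (sup (inf x' y') z')" using e by simp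
  also have "\<dots> = inf (sup x y) z" unfolding x' y' z' by simp
  finally show "sup x (inf y z) = inf (sup x y) z" .
qed

lemma dual_fl:
  assumes "finite_length TYPE('a::bounded_lattice)"
  shows "finite_length TYPE('a dual)"
  unfolding finite_length_def
proof (intro allI impI)
  fix C :: "'a dual set"
  assume ch: "Complete_Partial_Order.chain (\<le>) C"
  have "Complete_Partial_Order.chain (\<le>) (undual ` C)"
    unfolding chain_def
  proof (intro ballI)
    fix a b assume "a \<in> undual ` C" "b \<in> undual ` C"
    then obtain x y where xy: "x \<in> C" "y \<in> C" "a = undual x" "b = undual y" by blast
    then have "x \<le> y \<or> y \<le> x" using ch unfolding chain_def by blast
    then show "a \<le> b \<or> b \<le> a" using xy(3,4) dual_less_eq_iff by blast
  qed
  then have "finite (undual ` C)" using assms unfolding finite_length_def by blast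
  moreover have "inj_on undual C" using inj_undual by (rule inj_on_subset) simp
  ultimately show "finite C" using finite_imageD by blast
qed

lemma covers_dual: "covers (dual x) (dual y) \<longleftrightarrow> covers y (x::'a::order)"
proof -
  have "(\<exists>c. dual x < c \<and> c < dual y) \<longleftrightarrow> (\<exists>c. y < c \<and> c < x)"
  proof
    assume "\<exists>c. dual x < c \<and> c < dual y"
    then obtain c where c: "dual x < c" "c < dual y" by blast
    obtain c' where c': "c = dual c'" using dual_undual by metis
    show "\<exists>c. y < c \<and> c < x" using c c' by auto
  next
    assume "\<exists>c. y < c \<and> c < x"
    then obtain c where c: "y < c" "c < x" by blast
    show "\<exists>c. dual x < c \<and> c < dual y" using c by (intro exI[of _ "dual c"]) simp
  qed
  then show ?thesis unfolding covers_def by simp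
qed

lemma ustar_dual:
  assumes "finite_length TYPE('a::bounded_lattice)"
  shows "ustar (dual a) = dual (lplus (a::'a))"
proof (cases "a = bot")
  case True then show ?thesis by (simp add: ustar_def lplus_def)
next
  case False
  have nt: "dual a \<noteq> top" using False by (metis dual_bot_eq eq_dual_iff)
  have j1: "is_join {c. covers (dual a) c} (ustar (dual a))" using ustar_join[OF dual_fl[OF assms] nt] .
  have m: "is_meet {c. covers c a} (lplus a)" using lplus_meet[OF assms False] .
  have j2: "is_join {c. covers (dual a) c} (dual (lplus a))"
    unfolding is_join_def
  proof (intro conjI ballI allI impI)
    fix s assume s: "s \<in> {c. covers (dual a) c}"
    obtain s' where s': "s = dual s'" using dual_undual by metis
    have "covers s' a" using s s' by (simp add: covers_dual)
    then have "lplus a \<le> s'" using m unfolding is_meet_def by simp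
    then show "s \<le> dual (lplus a)" using s' by simp
  next
    fix y assume y: "\<forall>s\<in>{c. covers (dual a) c}. s \<le> y"
    obtain y' where y': "y = dual y'" using dual_undual by metis
    have "\<forall>s\<in>{c. covers c a}. y' \<le> s"
    proof
      fix s assume "s \<in> {c. covers c a}"
      then have "dual s \<le> y" using y by (simp add: covers_dual)
      then show "y' \<le> s" using y' by simp
    qed
    then have "y' \<le> lplus a" using m unfolding is_meet_def by blast
    then show "dual (lplus a) \<le> y" using y' by simp
  qed
  have u: "is_join S x \<Longrightarrow> is_join S z \<Longrightarrow> x = z" for S and x z :: "'a dual"
    unfolding is_join_def by (meson order.antisym)
  show ?thesis using u[OF j1 j2] .
qed

lemma lplus_dual:
  assumes "finite_length TYPE('a::bounded_lattice)"
  shows "lplus (dual a) = dual (ustar (a::'a))"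
proof (cases "a = top")
  case True then show ?thesis by (simp add: ustar_def lplus_def)
next
  case False
  have nt: "dual a \<noteq> bot" using False by (metis dual_top_eq eq_dual_iff)
  have j1: "is_meet {c. covers c (dual a)} (lplus (dual a))" using lplus_meet[OF dual_fl[OF assms] nt] .
  have m: "is_join {c. covers a c} (ustar a)" using ustar_join[OF assms False] .
  have j2: "is_meet {c. covers c (dual a)} (dual (ustar a))"
    unfolding is_meet_def
  proof (intro conjI ballI allI impI)
    fix s assume s: "s \<in> {c. covers c (dual a)}"
    obtain s' where s': "s = dual s'" using dual_undual by metis
    have "covers a s'" using s s' by (simp add: covers_dual)
    then have "s' \<le> ustar a" using m unfolding is_join_def by simp
    then show "dual (ustar a) \<le> s" using s' by simp
  next
    fix y assume y: "\<forall>s\<in>{c. covers c (dual a)}. y \<le> s"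
    obtain y' where y': "y = dual y'" using dual_undual by metis
    have "\<forall>s\<in>{c. covers a c}. s \<le> y'"
    proof
      fix s assume "s \<in> {c. covers a c}"
      then have "y \<le> dual s" using y by (simp add: covers_dual)
      then show "s \<le> y'" using y' by simp
    qed
    then have "ustar a \<le> y'" using m unfolding is_join_def by blast
    then show "y \<le> dual (ustar a)" using y' by simp
  qed
  have u: "is_meet S x \<Longrightarrow> is_meet S z \<Longrightarrow> x = z" for S and x z :: "'a dual"
    unfolding is_meet_def by (meson order.antisym)
  show ?thesis using u[OF j1 j2] .
qed

lemma key_dual:
  assumes md: "modular_lattice TYPE('a::bounded_lattice)" and fl: "finite_length TYPE('a)"
  shows "lplus (ustar (y::'a)) \<le> y"
proof -
  have "dual y \<le> ustar (lplus (dual y))" using key[OF dual_modular[OF md] dual_fl[OF fl]] .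
  also have "\<dots> = dual (lplus (ustar y))" using lplus_dual[OF fl] ustar_dual[OF fl] by simp
  finally show ?thesis by (simp add: dual_less_eq_iff[symmetric])
qed

lemma lplus_mono:
  assumes md: "modular_lattice TYPE('a::bounded_lattice)" and fl: "finite_length TYPE('a)" and ab: "(a::'a) \<le> b"
  shows "lplus a \<le> lplus b"
proof -
  have "dual b \<le> dual a" using ab by (simp add: dual_less_eq_iff[symmetric])
  then have "ustar (dual b) \<le> ustar (dual a)" using ustar_mono[OF dual_modular[OF md] dual_fl[OF fl]] by blast
  then show ?thesis using ustar_dual[OF fl] by (simp add: dual_less_eq_iff[symmetric])
qed

lemma galois:
  assumes md: "modular_lattice TYPE('a::bounded_lattice)" and fl: "finite_length TYPE('a)"
  shows "(y::'a) \<le> ustar x \<longleftrightarrow> lplus y \<le> x"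
proof
  assume "y \<le> ustar x"
  then have "lplus y \<le> lplus (ustar x)" using lplus_mono[OF md fl] by blast
  then show "lplus y \<le> x" using key_dual[OF md fl] order.trans by blast
next
  assume "lplus y \<le> x"
  then have "ustar (lplus y) \<le> ustar x" using ustar_mono[OF md fl] by blast
  then show "y \<le> ustar x" using key[OF md fl] order.trans by blast
qed

lemma lplus_le:
  assumes md: "modular_lattice TYPE('a::bounded_lattice)" and fl: "finite_length TYPE('a)"
  shows "lplus (a::'a) \<le> a"
  using galois[OF md fl] le_ustar[OF fl] by blast

theorem lemma6p1:
  fixes a b :: "'a::bounded_lattice"
  assumes "modular_lattice TYPE('a)" and "finite_length TYPE('a)"
  shows "(a \<le> b \<longrightarrow> ustar a \<le> ustar b)
    \<and> (a \<le> b \<longrightarrow> lplus a \<le> lplus b)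
    \<and> (a \<le> ustar (lplus a) \<and> ustar (lplus a) \<le> ustar a)
    \<and> (lplus a \<le> lplus (ustar a) \<and> lplus (ustar a) \<le> a)
    \<and> ustar (lplus (ustar a)) = ustar a
    \<and> lplus (ustar (lplus a)) = lplus a
    \<and> (a = lplus (ustar a) \<and> b = lplus (ustar b) \<longrightarrow> lplus (ustar (sup a b)) = sup a b)
    \<and> (a = ustar (lplus a) \<and> b = ustar (lplus b) \<longrightarrow> ustar (lplus (inf a b)) = inf a b)
    \<and> lplus (sup a b) = sup (lplus a) (lplus b)
    \<and> ustar (inf a b) = inf (ustar a) (ustar b)"
proof -
  note md = assms(1) and fl = assms(2)
  note G = galois[OF md fl] and um = ustar_mono[OF md fl] and lm = lplus_mono[OF md fl]
    and K = key[OF md fl] and KD = key_dual[OF md fl] and LU = le_ustar[OF fl] and LL = lplus_le[OF md fl]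
  have p1: "a \<le> b \<longrightarrow> ustar a \<le> ustar b" using um by (rule impI)
  have p2: "a \<le> b \<longrightarrow> lplus a \<le> lplus b" using lm by (rule impI)
  have p3a: "a \<le> ustar (lplus a)" by (rule K)
  have p3b: "ustar (lplus a) \<le> ustar a" by (rule um[OF LL])
  have p4a: "lplus a \<le> lplus (ustar a)" by (rule lm[OF LU])
  have p4b: "lplus (ustar a) \<le> a" by (rule KD)
  have p5: "ustar (lplus (ustar a)) = ustar a" using um[OF KD[of a]] K[of "ustar a"] by (rule order.antisym)
  have p6: "lplus (ustar (lplus a)) = lplus a" using KD[of "lplus a"] lm[OF K[of a]] by (rule order.antisym)
  have p7: "a = lplus (ustar a) \<and> b = lplus (ustar b) \<longrightarrow> lplus (ustar (sup a b)) = sup a b"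
  proof
    assume h: "a = lplus (ustar a) \<and> b = lplus (ustar b)"
    have "a \<le> lplus (ustar (sup a b))" using h lm[OF um[of a "sup a b"]] by (metis sup_ge1)
    moreover have "b \<le> lplus (ustar (sup a b))" using h lm[OF um[of b "sup a b"]] by (metis sup_ge2)
    ultimately show "lplus (ustar (sup a b)) = sup a b" using KD[of "sup a b"] by (meson order.antisym le_sup_iff)
  qed
  have p8: "a = ustar (lplus a) \<and> b = ustar (lplus b) \<longrightarrow> ustar (lplus (inf a b)) = inf a b"
  proof
    assume h: "a = ustar (lplus a) \<and> b = ustar (lplus b)"
    have "ustar (lplus (inf a b)) \<le> a" using h um[OF lm[of "inf a b" a]] by (metis inf_le1)
    moreover have "ustar (lplus (inf a b)) \<le> b" using h um[OF lm[of "inf a b" b]] by (metis inf_le2)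
    ultimately show "ustar (lplus (inf a b)) = inf a b" using K[of "inf a b"] by (meson order.antisym le_inf_iff)
  qed
  have p9: "lplus (sup a b) = sup (lplus a) (lplus b)"
  proof (rule order.antisym)
    have "a \<le> ustar (sup (lplus a) (lplus b))" by (simp only: G) simp
    moreover have "b \<le> ustar (sup (lplus a) (lplus b))" by (simp only: G) simp
    ultimately have "sup a b \<le> ustar (sup (lplus a) (lplus b))" by simp
    then show "lplus (sup a b) \<le> sup (lplus a) (lplus b)" by (simp only: G)
    show "sup (lplus a) (lplus b) \<le> lplus (sup a b)" using lm by simp
  qed
  have p10: "ustar (inf a b) = inf (ustar a) (ustar b)"
  proof (rule order.antisym)
    show "ustar (inf a b) \<le> inf (ustar a) (ustar b)" using um by simp
    have "lplus (inf (ustar a) (ustar b)) \<le> a" by (simp only: G[symmetric]) simp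
    moreover have "lplus (inf (ustar a) (ustar b)) \<le> b" by (simp only: G[symmetric]) simp
    ultimately have "lplus (inf (ustar a) (ustar b)) \<le> inf a b" by simp
    then show "inf (ustar a) (ustar b) \<le> ustar (inf a b)" by (simp only: G)
  qed
  show ?thesis
    by (intro conjI p1 p2 p3a p3b p4a p4b p5 p6 p7 p8 p9 p10)
qed

end
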